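(* For all $a,b\in\mathbb{C}$, the following identity of formal power series in $x$ holds: $$M(1;a;b;x)=\exp\bigl(M(0;a;b;x)\bigr).$$
   Context: For $m,a,b\in\mathbb{C}$ the master series is the formal power series $M(m;a;b;x)=m+x+\sum_{\ell\ge 2}\frac{x^\ell}{\ell!}\prod_{\gamma=1}^{\ell-1}(m-a\gamma+b\ell)$. Since $M(0;a;b;x)$ has zero constant term, its exponential is a well-defined formal power series. *)

theory Defs
  imports Complex_Main "HOL-Computational_Algebra.Formal_Power_Series"
begin

definition master_series :: "complex \<Rightarrow> complex \<Rightarrow> complex \<Rightarrow> complex fps" where
  "master_series m a b = Abs_fps (\<lambda>l.
     if l = 0 then m
     else if l = 1 then 1
     else (\<Prod>\<gamma>=1..l-1. m - a * of_nat \<gamma> + b * of_nat l) / of_nat (fact l))"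

end

theory Submission
  imports Defs
begin

definition psi :: "complex \<Rightarrow> complex fps" where
  "psi m = Abs_fps (\<lambda>k. if k = 0 then 0 else m ^ (k - 1) / of_nat (fact k))"

lemma psi_deriv: "fps_deriv (psi m) = fps_exp m"
proof (rule fps_ext)
  fix n
  have "of_nat (Suc n) * (m ^ n / of_nat (fact (Suc n))) = m ^ n / (of_nat (fact n) :: complex)"
  proof -
    have f: "(of_nat (fact (Suc n)) :: complex) = of_nat (Suc n) * of_nat (fact n)"
      by (simp only: fact_Suc[of n] of_nat_mult of_nat_id id_def)
    have "(of_nat (fact n) :: complex) \<noteq> 0" by simp
    moreover have "(of_nat (Suc n) :: complex) \<noteq> 0" by (simp only: of_nat_eq_0_iff) 
    ultimately show ?thesis unfolding f by (simp add: field_simps del: of_nat_Suc)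
  qed
  then show "fps_nth (fps_deriv (psi m)) n = fps_nth (fps_exp m) n"
    by (simp add: psi_def fps_deriv_def del: of_nat_Suc)
qed

lemma psi_mult: "fps_const m * psi m = fps_exp m - 1"
proof (rule fps_ext)
  fix n
  show "fps_nth (fps_const m * psi m) n = fps_nth (fps_exp m - 1) n"
  proof (cases n)
    case 0 then show ?thesis by (simp add: psi_def)
  next
    case (Suc k)
    then show ?thesis by (simp add: psi_def)
  qed
qed

lemma psi_0: "psi 0 = fps_X"
  by (rule fps_ext) (simp add: psi_def fps_X_def)

lemma psi_1: "psi 1 = fps_exp 1 - 1"
  using psi_mult[of 1] by simp

definition Nc :: "complex \<Rightarrow> complex \<Rightarrow> complex \<Rightarrow> nat \<Rightarrow> complex" where
  "Nc a b m n = (if n = 0 then 0 else (\<Prod>\<gamma>=1..n-1. m - a * of_nat \<gamma> + b * of_nat n) / of_nat (fact n))"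

lemma master_Nc: "master_series m a b = fps_const m + Abs_fps (Nc a b m)"
  by (rule fps_ext) (auto simp: master_series_def Nc_def)

lemma Nc_rec:
  "of_nat (Suc n) * Nc a b m (Suc n) =
     (if n = 0 then 1 else 0) + (m + b - a + b * of_nat n) * Nc a b (m + b - a) n"
proof (cases n)
  case 0 then show ?thesis by (simp add: Nc_def)
next
  case (Suc k)
  let ?f = "\<lambda>\<gamma>. m - a * of_nat \<gamma> + b * of_nat (Suc (Suc k))"
  have "(\<Prod>\<gamma>=1..Suc k. ?f \<gamma>) = ?f 1 * (\<Prod>\<gamma>=Suc 1..Suc k. ?f \<gamma>)"
    by (rule prod.atLeast_Suc_atMost) simp
  also have "(\<Prod>\<gamma>=Suc 1..Suc k. ?f \<gamma>) = (\<Prod>\<gamma>=1..k. ?f (Suc \<gamma>))"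
    by (rule prod.shift_bounds_cl_Suc_ivl)
  also have "(\<Prod>\<gamma>=1..k. ?f (Suc \<gamma>)) = (\<Prod>\<gamma>=1..k. m + b - a - a * of_nat \<gamma> + b * of_nat (Suc k))"
    by (rule prod.cong) (auto simp: algebra_simps)
  finally have P: "(\<Prod>\<gamma>=1..Suc k. ?f \<gamma>) = ?f 1 * (\<Prod>\<gamma>=1..k. m + b - a - a * of_nat \<gamma> + b * of_nat (Suc k))" .
  have F: "(of_nat (fact (Suc (Suc k))) :: complex) = of_nat (Suc (Suc k)) * of_nat (fact (Suc k))"
    by (simp only: fact_Suc[of "Suc k"] of_nat_mult of_nat_id id_def)
  have nz0: "(2 + of_nat k :: complex) = of_nat (k + 2)" by simp
  have nz: "(2 + of_nat k :: complex) \<noteq> 0" unfolding nz0 by (simp only: of_nat_eq_0_iff)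
  have F': "(fact (Suc (Suc k)) :: complex) = of_nat (Suc (Suc k)) * fact (Suc k)"
    by (rule fact_Suc)
  have "of_nat (Suc n) * Nc a b m (Suc n) = (\<Prod>\<gamma>=1..Suc k. ?f \<gamma>) / of_nat (fact (Suc k))"
    using Suc nz by (simp add: Nc_def F' del: fact_Suc)
  also have "\<dots> = (m + b - a + b * of_nat n) * Nc a b (m + b - a) n"
    unfolding P using Suc by (simp add: Nc_def algebra_simps)
  finally show ?thesis using Suc by simp
qed

theorem mainTheorem3:
  fixes a b :: complex
  shows "master_series 1 a b = fps_exp 1 oo master_series 0 a b"
proof -
  define h where "h = fps_exp (-b) * psi a"
  have h0: "fps_nth h 0 = 0" by (simp add: h_def psi_def)
  have h1: "fps_nth h 1 = 1" by (simp add: h_def psi_def fps_mult_nth numeral_2_eq_2)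
  define g where "g = fps_inv h"
  have g0: "fps_nth g 0 = 0" by (simp add: g_def fps_inv_def)
  have hg: "h oo g = fps_X" unfolding g_def by (rule fps_inv_right) (use h0 h1 in auto)
  define E where "E s = fps_exp s oo g" for s
  have Emult: "E s * E t = E (s + t)" for s t
    by (simp add: E_def fps_exp_add_mult fps_compose_mult_distrib[OF g0])
  have E0: "E 0 = 1" by (simp add: E_def)
  have constc: "(fps_const c * f) oo g = fps_const c * (f oo g)" for c f
    by (simp add: fps_compose_mult_distrib[OF g0])
  have psia: "psi a oo g = E b * fps_X"
  proof -
    have "psi a = fps_exp b * h"
      by (simp add: h_def mult.assoc[symmetric] fps_exp_add_mult[symmetric])
    then show ?thesis by (simp add: fps_compose_mult_distrib[OF g0] hg E_def)
  qed
  have dh: "fps_deriv h = fps_const (-b) * fps_exp (-b) * psi a + fps_exp (-b) * fps_exp a"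
    by (simp add: h_def psi_deriv algebra_simps)
  have "fps_deriv (h oo g) = (fps_deriv h oo g) * fps_deriv g"
    by (rule fps_compose_deriv[OF g0])
  then have "1 = (fps_deriv h oo g) * fps_deriv g" by (simp add: hg)
  also have "fps_deriv h oo g = fps_const (-b) * (E (-b) * (E b * fps_X)) + E (-b) * E a"
    unfolding dh by (simp add: fps_compose_add_distrib fps_compose_mult_distrib[OF g0] E_def psia
        mult.assoc)
  also have "\<dots> = fps_const (-b) * fps_X + E (a - b)"
    by (simp add: mult.assoc[symmetric] Emult E0)
  finally have one: "1 = (fps_const (-b) * fps_X + E (a - b)) * fps_deriv g" .
  have key: "fps_deriv g * E a = E b * (1 + fps_const b * fps_X * fps_deriv g)"
  proof -
    have "E b = E b * ((fps_const (-b) * fps_X + E (a - b)) * fps_deriv g)"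
      using one by simp
    also have "\<dots> = - (E b * (fps_const b * fps_X * fps_deriv g)) + (E b * E (a - b)) * fps_deriv g"
      unfolding fps_const_neg[symmetric] by algebra
    also have "E b * E (a - b) = E a" by (simp add: Emult)
    finally have F: "E b = - (E b * (fps_const b * fps_X * fps_deriv g)) + E a * fps_deriv g" .
    show ?thesis using F by algebra
  qed
  define K where "K m = psi m oo g" for m
  have K0: "fps_nth (K m) 0 = 0" for m by (simp add: K_def psi_def)
  have Kode: "fps_deriv (K m) = 1 + fps_const (m + b - a) * K (m + b - a)
      + fps_const b * fps_X * fps_deriv (K (m + b - a))" for m
  proof -
    let ?m = "m + b - a"
    have d: "fps_deriv (K s) = E s * fps_deriv g" for s
      by (simp add: K_def fps_compose_deriv[OF g0] psi_deriv E_def)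
    have c: "fps_const ?m * K ?m = E ?m - 1"
      by (simp add: K_def constc[symmetric] psi_mult fps_compose_sub_distrib E_def)
    have "E m * fps_deriv g = E (m - a) * (fps_deriv g * E a)"
      by (simp add: mult.assoc[symmetric] mult.commute[of _ "fps_deriv g"] Emult)
    also have "\<dots> = (E (m - a) * E b) * (1 + fps_const b * fps_X * fps_deriv g)"
      by (simp add: key mult.assoc)
    also have "E (m - a) * E b = E ?m" by (simp add: Emult algebra_simps)
    finally have L: "E m * fps_deriv g = E ?m * (1 + fps_const b * fps_X * fps_deriv g)" .
    have R: "1 + (E ?m - 1) + fps_const b * fps_X * (E ?m * fps_deriv g)
        = E ?m * (1 + fps_const b * fps_X * fps_deriv g)"
      by (simp add: distrib_left mult_ac)
    show ?thesis unfolding d c R L ..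
  qed
  have Krec: "of_nat (Suc n) * fps_nth (K m) (Suc n) =
     (if n = 0 then 1 else 0) + (m + b - a + b * of_nat n) * fps_nth (K (m + b - a)) n" for m n
  proof -
    have "of_nat (Suc n) * fps_nth (K m) (Suc n) = fps_nth (fps_deriv (K m)) n"
      by (simp add: fps_deriv_def mult.commute)
    also have "\<dots> = (if n = 0 then 1 else 0) + (m + b - a + b * of_nat n) * fps_nth (K (m + b - a)) n"
    proof (cases n)
      case 0 then show ?thesis unfolding Kode[of m] by (simp add: K0)
    next
      case (Suc k)
      then show ?thesis unfolding Kode[of m] by (simp add: fps_deriv_def algebra_simps)
    qed
    finally show ?thesis .
  qed
  have KN: "\<forall>m. fps_nth (K m) n = Nc a b m n" for n
  proof (induction n)
    case 0 then show ?case by (simp add: K0 Nc_def)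
  next
    case (Suc n)
    show ?case
    proof
      fix m
      have "of_nat (Suc n) * fps_nth (K m) (Suc n) = of_nat (Suc n) * Nc a b m (Suc n)"
        unfolding Krec Nc_rec using Suc by simp
      then show "fps_nth (K m) (Suc n) = Nc a b m (Suc n)"
        by (simp del: of_nat_Suc)
    qed
  qed
  have KA: "K m = Abs_fps (Nc a b m)" for m
    by (rule fps_ext) (simp add: KN)
  have g_eq: "master_series 0 a b = g"
    using KA[of 0] by (simp add: master_Nc K_def psi_0 g0)
  have "master_series 1 a b = 1 + K 1"
    by (simp add: master_Nc KA)
  also have "\<dots> = fps_exp 1 oo g"
    by (simp add: K_def psi_1 fps_compose_sub_distrib)
  finally show ?thesis by (simp add: g_eq)
qed

end
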